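(* Let $\mathcal{X}=\langle x_1,\dots,x_n\rangle$ be an input sequence of $n$ colored items in which exactly $\sigma$ distinct colors appear, and let $o_1\ge o_2$ denote the number of occurrences in $\mathcal{X}$ of the most frequent and of the second most frequent color, respectively. Let $k\ge 1$ be a buffer size satisfying at least one of $$2\left\lceil \frac{k}{\sigma}\right\rceil > o_1 \qquad\text{or}\qquad \left\lceil \frac{k}{\sigma}\right\rceil > o_2 .$$ Process $\mathcal{X}$ with a buffer of size $k$ using the Most-Frequent-Color strategy (described in the context), and assume that every color selection during the run is made at a moment when the buffer contains exactly $k$ items. Then the output sequence is optimal: the items of each color appear consecutively in the output, i.e. the output consists of exactly $\sigma$ maximal monochromatic blocks (equivalently, it has exactly $\sigma-1$ color changes, the minimum possible).
   Context: Reordering buffer model (uniform cost): items of the input sequence arrive one at a time, in order, and are inserted into a buffer that can hold at most $k$ items. At any time there is a current output color. The strategy is lazy: whenever the buffer contains items of the current output color, these items are removed from the buffer and appended to the output sequence, and vacancies are refilled from the input (newly arriving items of the current output color are likewise output immediately). When the buffer contains no item of the current output color, a new output color is selected among the colors present in the buffer, and all buffer items of that color are appended to the output. The Most-Frequent-Color strategy always selects, as the new output color, a color having the largest number of items currently in the buffer (ties broken arbitrarily). The process continues until the input and the buffer are both empty. The cost of the output is the number of pairs of consecutive output items with different colors; any output must contain at least $\sigma$ maximal monochromatic blocks. *)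

theory Defs
  imports Complex_Main "HOL-Library.Multiset"
begin

text \<open>Lazy reordering buffer run with the Most-Frequent-Color strategy (uniform cost).
  mfc_run k inp buf cur out full: starting from the configuration with remaining input inp,
  buffer contents buf (multiset of colors), current output color cur, the process
  (with some tie-breaking) produces the remaining output out; full is True iff every
  color selection in this run is made while the buffer holds exactly k items.\<close>

inductive mfc_run :: "nat \<Rightarrow> 'c list \<Rightarrow> 'c multiset \<Rightarrow> 'c option \<Rightarrow> 'c list \<Rightarrow> bool \<Rightarrow> bool"
  for k :: nat where
  finish: "mfc_run k [] {#} cur [] True"
| flush: "\<lbrakk> cur = Some c; count buf c > 0;
            mfc_run k inp (buf - replicate_mset (count buf c) c) cur out f \<rbrakk>
          \<Longrightarrow> mfc_run k inp buf cur (replicate (count buf c) c @ out) f"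
| read: "\<lbrakk> \<forall>c. cur = Some c \<longrightarrow> count buf c = 0; size buf < k;
           mfc_run k xs (if cur = Some x then buf else add_mset x buf) cur out f \<rbrakk>
         \<Longrightarrow> mfc_run k (x # xs) buf cur (if cur = Some x then x # out else out) f"
| select: "\<lbrakk> \<forall>c'. cur = Some c' \<longrightarrow> count buf c' = 0; inp = [] \<or> size buf \<ge> k;
             count buf c > 0; \<forall>d. count buf d \<le> count buf c;
             mfc_run k inp buf (Some c) out f \<rbrakk>
           \<Longrightarrow> mfc_run k inp buf cur out (f \<and> size buf = k)"

text \<open>Occurrence counts of the colors of xs, sorted non-increasingly; occ_rank xs 0 = o_1,
  occ_rank xs 1 = o_2 (0 if there is no such color).\<close>

definition color_counts :: "'c list \<Rightarrow> nat list" where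
  "color_counts xs = rev (sort (map (count_list xs) (remdups xs)))"

definition occ_rank :: "'c list \<Rightarrow> nat \<Rightarrow> nat" where
  "occ_rank xs i = (if i < length (color_counts xs) then color_counts xs ! i else 0)"

end

theory Submission
  imports Defs
begin


definition goodblk :: "int \<Rightarrow> 'c list list \<Rightarrow> bool" where
  "goodblk M bs = (\<forall>b\<in>set bs. b \<noteq> [] \<and> b = replicate (length b) (hd b) \<and> M \<le> int (length b))"

lemma run_mset:
  assumes "mfc_run k inp buf cur out f"
  shows "mset out = mset inp + buf"
  using assms
proof induction
  case (flush cur c buf inp out f)
  have s: "replicate_mset (count buf c) c \<subseteq># buf"
    using count_le_replicate_mset_subset_eq[of "count buf c" buf c] by simp
  have "mset (replicate (count buf c) c @ out) = replicate_mset (count buf c) c + mset out" by simp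
  also have "\<dots> = replicate_mset (count buf c) c + (mset inp + (buf - replicate_mset (count buf c) c))"
    using flush.IH by simp
  also have "\<dots> = mset inp + (replicate_mset (count buf c) c + (buf - replicate_mset (count buf c) c))"
    by (rule add.left_commute)
  also have "\<dots> = mset inp + buf"
    using subset_mset.add_diff_inverse[OF s] by simp
  finally show ?case .
next
  case (read cur buf xs x out f)
  then show ?case by (cases "cur = Some x") simp_all
qed simp_all

lemma maxcount:
  assumes "size buf = k" "set_mset buf \<subseteq> S" "finite S" "\<forall>d. count buf d \<le> count buf c"
  shows "k \<le> card S * count buf c"
proof -
  have "k = (\<Sum>d\<in>set_mset buf. count buf d)" using assms(1) size_multiset_overloaded_eq by metis
  also have "\<dots> \<le> (\<Sum>d\<in>set_mset buf. count buf c)" by (rule sum_mono) (use assms in auto)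
  also have "\<dots> = card (set_mset buf) * count buf c" by simp
  also have "\<dots> \<le> card S * count buf c" using assms card_mono by (simp add: card_mono)
  finally show ?thesis .
qed

lemma run_inv:
  assumes "mfc_run k inp buf cur out f"
  shows "f \<longrightarrow> set_mset buf \<union> set inp \<subseteq> S \<longrightarrow> finite S \<longrightarrow>
    (\<exists>j bs. out = (case cur of None \<Rightarrow> [] | Some c \<Rightarrow> replicate j c) @ concat bs
       \<and> (\<forall>c. cur = Some c \<longrightarrow> count buf c \<le> j)
       \<and> goodblk \<lceil>real k / real (card S)\<rceil> bs)"
  using assms
proof induction
  case (finish cur)
  then show ?case by (auto simp: goodblk_def intro: exI[of _ "[]"] split: option.splits)
next
  case (flush cur c buf inp out f)
  show ?case
  proof (intro impI)
    assume a: f "set_mset buf \<union> set inp \<subseteq> S" "finite S"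
    have "set_mset (buf - replicate_mset (count buf c) c) \<subseteq> set_mset buf"
      by (meson in_diffD subsetI)
    with a flush obtain j bs where
      "out = replicate j c @ concat bs" "count (buf - replicate_mset (count buf c) c) c \<le> j"
      "goodblk \<lceil>real k / real (card S)\<rceil> bs" by auto
    then show "\<exists>j bs. replicate (count buf c) c @ out = (case cur of None \<Rightarrow> [] | Some c \<Rightarrow> replicate j c) @ concat bs
       \<and> (\<forall>c. cur = Some c \<longrightarrow> count buf c \<le> j)
       \<and> goodblk \<lceil>real k / real (card S)\<rceil> bs"
      using flush(1) by (intro exI[of _ "count buf c + j"] exI[of _ bs]) (simp add: replicate_add)
  qed
next
  case (read cur buf xs x out f)
  show ?case
  proof (intro impI)
    assume a: f "set_mset buf \<union> set (x # xs) \<subseteq> S" "finite S"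
    then obtain j bs where o: "out = (case cur of None \<Rightarrow> [] | Some c \<Rightarrow> replicate j c) @ concat bs"
       "(\<forall>c. cur = Some c \<longrightarrow> count (if cur = Some x then buf else add_mset x buf) c \<le> j)"
       "goodblk \<lceil>real k / real (card S)\<rceil> bs" using read by (auto split: if_splits)
    show "\<exists>j bs. (if cur = Some x then x # out else out) = (case cur of None \<Rightarrow> [] | Some c \<Rightarrow> replicate j c) @ concat bs
       \<and> (\<forall>c. cur = Some c \<longrightarrow> count buf c \<le> j)
       \<and> goodblk \<lceil>real k / real (card S)\<rceil> bs"
    proof (cases "cur = Some x")
      case True
      then show ?thesis using o read(1) by (intro exI[of _ "Suc j"] exI[of _ bs]) auto
    next
      case False
      then show ?thesis using o read(1) by (intro exI[of _ j] exI[of _ bs]) auto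
    qed
  qed
next
  case (select cur buf inp c out f)
  show ?case
  proof (intro impI)
    assume a: "f \<and> size buf = k" "set_mset buf \<union> set inp \<subseteq> S" "finite S"
    then obtain j bs where o: "out = replicate j c @ concat bs" "count buf c \<le> j"
       "goodblk \<lceil>real k / real (card S)\<rceil> bs" using select by auto
    have kk: "k \<le> card S * count buf c" using maxcount[of buf k S c] a select by auto
    have "c \<in> S" using a select(3) by auto
    hence cS: "card S > 0" using a(3) card_gt_0_iff by blast
    have "k \<le> card S * j" using kk o(2) by (meson mult_le_mono2 order_trans)
    hence "real k \<le> real (card S) * real j" by (metis of_nat_le_iff of_nat_mult)
    hence "real k / real (card S) \<le> real j"
      using cS by (simp add: pos_divide_le_eq mult.commute)
    hence M: "\<lceil>real k / real (card S)\<rceil> \<le> int j" by (simp add: ceiling_le_iff)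
    have jpos: "0 < j" using o(2) select(3) by linarith
    show "\<exists>j bs. out = (case cur of None \<Rightarrow> [] | Some c \<Rightarrow> replicate j c) @ concat bs
       \<and> (\<forall>c. cur = Some c \<longrightarrow> count buf c \<le> j)
       \<and> goodblk \<lceil>real k / real (card S)\<rceil> bs"
      apply (rule exI[of _ 0], rule exI[of _ "replicate j c # bs"])
      using o M select(1) jpos by (cases cur) (simp_all add: goodblk_def)
  qed
qed

lemma rda_rep: "remdups_adj (replicate (Suc n) a @ ys) = remdups_adj (a # ys)"
  by (induction n) auto

lemma rda_rep2: "remdups_adj (a # replicate (Suc n) h @ r) = remdups_adj (a # h # r)"
proof (cases "a = h")
  case True
  have e1: "a # replicate (Suc n) h @ r = replicate (Suc (Suc n)) h @ r" using True by simp
  have e2: "a # h # r = replicate (Suc 1) h @ r" using True by simp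
  show ?thesis unfolding e1 e2 rda_rep ..
next
  case False
  have "remdups_adj (a # replicate (Suc n) h @ r) = a # remdups_adj (replicate (Suc n) h @ r)"
    using False by simp
  also have "\<dots> = a # remdups_adj (h # r)" unfolding rda_rep ..
  also have "\<dots> = remdups_adj (a # h # r)" using False by simp
  finally show ?thesis .
qed

lemma count_rep: "count_list (replicate n h) c = (if h = c then n else 0)"
  by (induction n) auto

lemma rda_concat_aux: "goodblk M bs \<Longrightarrow> remdups_adj (a # concat bs) = remdups_adj (a # map hd bs)"
proof (induction bs arbitrary: a)
  case Nil then show ?case by simp
next
  case (Cons b bs)
  have g: "goodblk M bs" using Cons.prems by (simp add: goodblk_def)
  obtain n where b: "b = replicate (Suc n) (hd b)" using Cons.prems unfolding goodblk_def
    by (metis length_greater_0_conv list.set_intros(1) Suc_pred)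
  have "remdups_adj (a # concat (b # bs)) = remdups_adj (a # replicate (Suc n) (hd b) @ concat bs)"
    using b by (metis concat.simps(2) append_Cons)
  also have "\<dots> = remdups_adj (a # hd b # concat bs)"
    by (rule rda_rep2)
  also have "\<dots> = remdups_adj (a # hd b # map hd bs)"
    using Cons.IH[OF g, of "hd b"] by (cases "a = hd b") simp_all
  finally show ?case by simp
qed

lemma rda_concat: "goodblk M bs \<Longrightarrow> remdups_adj (concat bs) = remdups_adj (map hd bs)"
proof (cases bs)
  case (Cons b bs')
  assume gb: "goodblk M bs"
  have g: "goodblk M bs'" using gb Cons by (simp add: goodblk_def)
  obtain n where b: "b = replicate (Suc n) (hd b)" using gb Cons unfolding goodblk_def
    by (metis length_greater_0_conv list.set_intros(1) Suc_pred)
  have "remdups_adj (concat bs) = remdups_adj (replicate (Suc n) (hd b) @ concat bs')"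
    using b Cons by (metis concat.simps(2))
  also have "\<dots> = remdups_adj (hd b # concat bs')" by (rule rda_rep)
  also have "\<dots> = remdups_adj (hd b # map hd bs')" by (rule rda_concat_aux[OF g])
  finally show ?thesis using Cons by simp
qed simp

lemma count_blocks: "goodblk M bs \<Longrightarrow> M * int (count_list (map hd bs) c) \<le> int (count_list (concat bs) c)"
proof (induction bs)
  case Nil then show ?case by simp
next
  case (Cons b bs)
  have g: "goodblk M bs" and b: "b = replicate (length b) (hd b)" and L: "M \<le> int (length b)"
    using Cons.prems by (auto simp: goodblk_def)
  have cb: "count_list b c = (if hd b = c then length b else 0)"
    by (subst b) (simp add: count_rep)
  show ?case using Cons.IH[OF g] cb L by (auto simp: algebra_simps)
qed


lemma occ0: assumes "c \<in> set xs" shows "count_list xs c \<le> occ_rank xs 0"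
proof -
  define s where "s = sort (map (count_list xs) (remdups xs))"
  have cc: "color_counts xs = rev s" by (simp add: color_counts_def s_def)
  have mem: "count_list xs c \<in> set s" using assms by (simp add: s_def)
  then obtain i where i: "i < length s" "s ! i = count_list xs c" by (metis in_set_conv_nth)
  have srt: "sorted s" by (simp add: s_def)
  have ne: "0 < length s" using i(1) by linarith
  have "occ_rank xs 0 = rev s ! 0" using ne by (simp add: occ_rank_def cc del: length_greater_0_conv)
  also have "\<dots> = s ! (length s - 1)" using ne by (simp add: rev_nth)
  finally have "occ_rank xs 0 = s ! (length s - 1)" .
  moreover have "s ! i \<le> s ! (length s - 1)" using i srt by (intro sorted_nth_mono) auto
  ultimately show ?thesis using i by simp
qed

lemma occ1: assumes "c \<in> set xs" "d \<in> set xs" "c \<noteq> d"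
  shows "min (count_list xs c) (count_list xs d) \<le> occ_rank xs 1"
proof (rule ccontr)
  assume neg: "\<not> ?thesis"
  define L where "L = map (count_list xs) (remdups xs)"
  define s where "s = sort L"
  define n where "n = length s"
  have cc: "color_counts xs = rev s" by (simp add: color_counts_def s_def L_def)
  have "card {c, d} \<le> card (set xs)" using assms by (intro card_mono) auto
  hence n2: "2 \<le> n" using assms by (simp add: n_def s_def L_def length_remdups_card_conv)
  define t where "t = s ! (n - 2)"
  have o1: "occ_rank xs 1 = t"
    using n2 by (simp add: occ_rank_def cc rev_nth n_def t_def numeral_2_eq_2 Suc_diff_Suc)
  have gt: "t < count_list xs c" "t < count_list xs d" using neg o1 by auto
  have "length (filter (\<lambda>v. t < v) L) = length (filter (\<lambda>x. t < count_list xs x) (remdups xs))"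
    by (simp add: L_def filter_map o_def)
  also have "\<dots> = card {x \<in> set xs. t < count_list xs x}"
    by (simp add: distinct_length_filter) (rule arg_cong[where f=card], blast)
  also have "\<dots> \<ge> card {c, d}" using gt assms by (intro card_mono) auto
  finally have A: "2 \<le> length (filter (\<lambda>v. t < v) L)" using assms by simp
  have "mset s = mset L" by (simp add: s_def)
  hence "length (filter (\<lambda>v. t < v) s) = length (filter (\<lambda>v. t < v) L)"
    by (metis mset_filter size_mset)
  moreover have "length (filter (\<lambda>v. t < v) s) \<le> 1"
  proof -
    have "take (Suc (n - 1)) s = take (n - 1) s @ [s ! (n - 1)]"
      using n2 by (intro take_Suc_conv_app_nth) (simp add: n_def)
    hence sp: "s = take (n - 1) s @ [s ! (n - 1)]" using n2 by (simp add: n_def)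
    have "\<forall>v\<in>set (take (n - 1) s). v \<le> t"
    proof
      fix v assume "v \<in> set (take (n - 1) s)"
      then obtain i where "i < n - 1" "v = s ! i" using n2 by (auto simp: in_set_conv_nth n_def)
      moreover have "sorted s" by (simp add: s_def)
      ultimately show "v \<le> t" unfolding t_def using n2 sorted_nth_mono[of s i "n - 2"] by (simp add: n_def)
    qed
    hence "filter (\<lambda>v. t < v) (take (n - 1) s) = []" by (auto simp: filter_empty_conv)
    then show ?thesis by (subst sp) simp
  qed
  ultimately show False using A by simp
qed

theorem lemma1:
  fixes xs :: "'c list" and k :: nat
  assumes "k \<ge> 1"
    and "2 * \<lceil>real k / real (card (set xs))\<rceil> > int (occ_rank xs 0)
         \<or> \<lceil>real k / real (card (set xs))\<rceil> > int (occ_rank xs 1)"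
    and "mfc_run k xs {#} None out True"
  shows "length (remdups_adj out) = card (set xs)"
proof -
  have ms: "mset out = mset xs" using run_mset[OF assms(3)] by simp
  hence so: "set out = set xs" by (metis set_mset_mset)
  have cnt: "count_list out c = count_list xs c" for c using ms by (metis count_mset)
  define M where "M = \<lceil>real k / real (card (set xs))\<rceil>"
  have "0 \<le> real k / real (card (set xs))" by simp
  hence "0 \<le> real_of_int M" unfolding M_def by (meson le_of_int_ceiling order_trans)
  hence M0: "0 \<le> M" by simp
  obtain j bs where o: "out = concat bs" and g: "goodblk M bs"
    using run_inv[OF assms(3), of "set xs"] unfolding M_def by auto
  have R: "remdups_adj out = remdups_adj (map hd bs)" using rda_concat[OF g] o by simp
  have cb: "M * int (count_list (map hd bs) c) \<le> int (count_list xs c)" for c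
    using count_blocks[OF g, of c] o cnt by simp
  have D: "distinct (remdups_adj (map hd bs))"
    using assms(2) unfolding M_def[symmetric]
  proof
    assume A: "int (occ_rank xs 0) < 2 * M"
    show ?thesis
    proof (rule ccontr)
      assume "\<not> ?thesis"
      hence "\<not> distinct (map hd bs)" using remdups_adj_distinct by metis
      then obtain c where "count (mset (map hd bs)) c \<noteq> (if c \<in> set (map hd bs) then 1 else 0)"
        unfolding distinct_count_atmost_1 by blast
      hence cin: "c \<in> set (map hd bs)"
        by (metis count_mset_0_iff)
      hence "count (mset (map hd bs)) c \<noteq> 1" "0 < count (mset (map hd bs)) c"
        using \<open>count (mset (map hd bs)) c \<noteq> _\<close> count_mset_gt_0 by auto
      hence c2: "2 \<le> count_list (map hd bs) c" using count_mset[of "map hd bs" c] by linarith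
      have "M * 2 \<le> M * int (count_list (map hd bs) c)" using c2 M0 by (intro mult_left_mono) auto
      hence big: "2 * M \<le> int (count_list xs c)" using cb[of c] by simp
      hence "count_list xs c > 0" using A by simp
      hence "c \<in> set xs" by (metis count_mset count_mset_0_iff less_irrefl)
      from occ0[OF this] big A show False by simp
    qed
  next
    assume A: "int (occ_rank xs 1) < M"
    have mem: "e \<in> set xs \<and> M \<le> int (count_list xs e)" if "e \<in> set (map hd bs)" for e
    proof -
      have "1 \<le> count_list (map hd bs) e" using count_mset_gt_0[OF that] count_mset[of "map hd bs" e] by linarith
      hence "M \<le> M * int (count_list (map hd bs) e)" using M0 by (simp add: mult_le_cancel_left1)
      hence "M \<le> int (count_list xs e)" using cb[of e] by simp
      moreover hence "count_list xs e > 0" using A by simp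
      ultimately show ?thesis by (metis count_mset count_mset_0_iff less_irrefl)
    qed
    have one: "e = e'" if "e \<in> set (map hd bs)" "e' \<in> set (map hd bs)" for e e'
    proof (rule ccontr)
      assume "e \<noteq> e'"
      have "min (count_list xs e) (count_list xs e') \<le> occ_rank xs 1"
        using occ1[OF _ _ \<open>e \<noteq> e'\<close>] mem[OF that(1)] mem[OF that(2)] by blast
      then show False using mem[OF that(1)] mem[OF that(2)] A by linarith
    qed
    show ?thesis
    proof (cases "map hd bs")
      case Nil then show ?thesis by simp
    next
      case (Cons e r)
      have "map hd bs = replicate (length (map hd bs)) e"
      proof (rule replicate_eqI)
        fix y assume "y \<in> set (map hd bs)"
        moreover have "e \<in> set (map hd bs)" using Cons by simp
        ultimately show "y = e" using one by blast
      qed simp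
      hence "remdups_adj (map hd bs) = remdups_adj (replicate (length (map hd bs)) e)" by simp
      then show ?thesis by (simp add: remdups_adj_replicate)
    qed
  qed
  have "length (remdups_adj out) = card (set (remdups_adj out))"
    using D R distinct_card[of "remdups_adj (map hd bs)"] by simp
  also have "\<dots> = card (set xs)" using so by simp
  finally show ?thesis .
qed

end
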